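(* Under the standing assumptions, suppose $\bar u\in X\setminus\{0\}$ satisfies $\bar\lambda:=R(\bar u)=\max_{u\in X\setminus\{0\}}R(u)<\infty$, and let $\bar\zeta\in\partial J(\bar u)$. Then $\bar\zeta/\bar\lambda\in\partial H(\bar u)$; that is, $\bar u$ is a $p$-eigenvector of $J$ with subgradient $\bar\zeta$ and eigenvalue $\bar\lambda$.
   Context: Standing assumptions: $X$ is a real reflexive Banach space with dual $X^*$ and duality pairing $\langle\cdot,\cdot\rangle$; $\Gamma_0(X)$ is the class of proper, lower semi-continuous, convex functionals $X\to\mathbb{R}\cup\{+\infty\}$. Fix $1<p<\infty$ and $q=\frac{p}{p-1}$. Let $J\in\Gamma_0(X)$, and let $H\in\Gamma_0(X)$ be absolutely $p$-homogeneous ($H(tu)=|t|^pH(u)$) such that $|u|_H:=(pH(u))^{1/p}$ is a norm on $X$, so $H(u)=\frac1p|u|_H^p$. The subdifferential is $\partial J(u)=\{\zeta\in X^*:\ J(u)+\langle\zeta,v-u\rangle\le J(v)\ \forall v\in X\}$. Growth assumption: there is $c>0$ with $H(u)\le cJ(u)$ for all $u\in X$. The Rayleigh quotient is $R(u)=J(u)/H(u)$ for $u\ne0$. A $p$-eigenvector of $J$: $u\in X\setminus\{0\}$ with subgradient $\zeta\in\partial J(u)$ and eigenvalue $\lambda=R(u)\in\mathbb{R}$ such that $\zeta\in\lambda\,\partial H(u)$. *)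

theory Defs
  imports "HOL-Analysis.Analysis"
begin

text \<open>The dual space X* is modelled as the bounded linear functionals 'a \<Rightarrow>L real;
  the duality pairing is blinfun application.\<close>

definition reflexive_space :: "'a::banach itself \<Rightarrow> bool" where
  "reflexive_space TYPE('a) \<longleftrightarrow>
     (\<forall>\<Phi> :: ('a \<Rightarrow>\<^sub>L real) \<Rightarrow>\<^sub>L real. \<exists>x::'a. \<forall>f. blinfun_apply \<Phi> f = blinfun_apply f x)"

text \<open>Functionals X \<rightarrow> R \<union> {+\<infinity>} are modelled as ereal-valued functions never taking -\<infinity>.\<close>

definition proper_fun :: "('a \<Rightarrow> ereal) \<Rightarrow> bool" where
  "proper_fun J \<longleftrightarrow> (\<forall>x. J x \<noteq> -\<infinity>) \<and> (\<exists>x. J x \<noteq> \<infinity>)"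

definition lsc_fun :: "('a::topological_space \<Rightarrow> ereal) \<Rightarrow> bool" where
  "lsc_fun J \<longleftrightarrow> (\<forall>a::ereal. closed {x. J x \<le> a})"

definition convex_fun :: "('a::real_vector \<Rightarrow> ereal) \<Rightarrow> bool" where
  "convex_fun J \<longleftrightarrow> (\<forall>x y t. 0 < t \<and> t < 1 \<longrightarrow>
      J (t *\<^sub>R x + (1 - t) *\<^sub>R y) \<le> ereal t * J x + ereal (1 - t) * J y)"

definition Gamma0 :: "('a::real_normed_vector \<Rightarrow> ereal) \<Rightarrow> bool" where
  "Gamma0 J \<longleftrightarrow> proper_fun J \<and> lsc_fun J \<and> convex_fun J"

definition subdiff :: "('a::real_normed_vector \<Rightarrow> ereal) \<Rightarrow> 'a \<Rightarrow> ('a \<Rightarrow>\<^sub>L real) set" where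
  "subdiff J u = {\<zeta>. \<forall>v. J u + ereal (blinfun_apply \<zeta> (v - u)) \<le> J v}"

definition is_norm_fun :: "('a::real_vector \<Rightarrow> real) \<Rightarrow> bool" where
  "is_norm_fun N \<longleftrightarrow> (\<forall>x. 0 \<le> N x) \<and> (\<forall>x. N x = 0 \<longleftrightarrow> x = 0)
     \<and> (\<forall>t x. N (t *\<^sub>R x) = \<bar>t\<bar> * N x) \<and> (\<forall>x y. N (x + y) \<le> N x + N y)"

definition abs_p_homogeneous :: "real \<Rightarrow> ('a::real_vector \<Rightarrow> ereal) \<Rightarrow> bool" where
  "abs_p_homogeneous p H \<longleftrightarrow> (\<forall>t u. H (t *\<^sub>R u) = ereal (\<bar>t\<bar> powr p) * H u)"

text \<open>Rayleigh quotient R(u) = J(u)/H(u) for u \<noteq> 0 (H(u) is finite and positive there).\<close>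

definition rayleigh :: "('a \<Rightarrow> ereal) \<Rightarrow> ('a \<Rightarrow> ereal) \<Rightarrow> 'a \<Rightarrow> ereal" where
  "rayleigh J H u = J u / H u"

definition p_eigenvector ::
  "('a::real_normed_vector \<Rightarrow> ereal) \<Rightarrow> ('a \<Rightarrow> ereal) \<Rightarrow> 'a \<Rightarrow> ('a \<Rightarrow>\<^sub>L real) \<Rightarrow> real \<Rightarrow> bool" where
  "p_eigenvector J H u \<zeta> lam \<longleftrightarrow> u \<noteq> 0 \<and> \<zeta> \<in> subdiff J u \<and> rayleigh J H u = ereal lam
     \<and> (\<exists>\<eta> \<in> subdiff H u. \<zeta> = lam *\<^sub>R \<eta>)"

end

theory Submission
  imports Defs
begin

lemma Hnonneg:
  fixes H :: "'a::real_normed_vector \<Rightarrow> ereal" and p :: real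
  assumes H: "Gamma0 H" and Hhom: "abs_p_homogeneous p H" and Hfin: "\<forall>u. H u \<noteq> \<infinity>"
  shows "0 \<le> H u"
proof -
  have pr: "\<forall>x. H x \<noteq> -\<infinity>" using H unfolding Gamma0_def proper_fun_def by blast
  obtain h where h: "H u = ereal h" using pr Hfin by (cases "H u") auto
  have "H (-u) = ereal (\<bar>-1\<bar> powr p) * H u" using Hhom unfolding abs_p_homogeneous_def
    by (metis scaleR_minus1_left)
  hence hm: "H (-u) = ereal h" using h by simp
  have "H 0 = ereal (\<bar>0\<bar> powr p) * H u" using Hhom unfolding abs_p_homogeneous_def
    by (metis scaleR_zero_left)
  hence h0: "H 0 = 0" using h by simp
  have "H ((1/2) *\<^sub>R u + (1 - 1/2) *\<^sub>R (-u)) \<le> ereal (1/2) * H u + ereal (1 - 1/2) * H (-u)"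
  proof -
    have cv: "\<forall>x y t. 0 < t \<and> t < 1 \<longrightarrow>
      H (t *\<^sub>R x + (1 - t) *\<^sub>R y) \<le> ereal t * H x + ereal (1 - t) * H y"
      using H unfolding Gamma0_def convex_fun_def by blast
    show ?thesis using cv[rule_format, of "1/2" u "-u"] by simp
  qed
  moreover have "(1/2::real) *\<^sub>R u + (1 - 1/2) *\<^sub>R (-u) = 0" by (simp add: scaleR_minus_right)
  ultimately have "(0::ereal) \<le> ereal (1/2) * ereal h + ereal (1/2) * ereal h"
    using h0 h hm by simp
  thus ?thesis using h by simp
qed

theorem mainTheorem4:
  fixes J H :: "'a::banach \<Rightarrow> ereal" and p c :: real and ubar :: 'a and zeta :: "'a \<Rightarrow>\<^sub>L real"
  assumes refl: "reflexive_space TYPE('a)"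
    and p: "1 < p"
    and J: "Gamma0 J"
    and H: "Gamma0 H"
    and Hhom: "abs_p_homogeneous p H"
    and Hfin: "\<forall>u. H u \<noteq> \<infinity>"
    and Hnorm: "is_norm_fun (\<lambda>u. (p * real_of_ereal (H u)) powr (1 / p))"
    and c: "0 < c" "\<forall>u. H u \<le> ereal c * J u"
    and ubar: "ubar \<noteq> 0"
    and maxR: "\<forall>u. u \<noteq> 0 \<longrightarrow> rayleigh J H u \<le> rayleigh J H ubar"
    and finR: "rayleigh J H ubar < \<infinity>"
    and zeta: "zeta \<in> subdiff J ubar"
  shows "(inverse (real_of_ereal (rayleigh J H ubar))) *\<^sub>R zeta \<in> subdiff H ubar
         \<and> p_eigenvector J H ubar zeta (real_of_ereal (rayleigh J H ubar))"
proof -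
  define h where "h u = real_of_ereal (H u)" for u
  have prH: "\<forall>x. H x \<noteq> -\<infinity>" using H unfolding Gamma0_def proper_fun_def by blast
  have prJ: "\<forall>x. J x \<noteq> -\<infinity>" using J unfolding Gamma0_def proper_fun_def by blast
  have Hh: "H u = ereal (h u)" for u using prH Hfin unfolding h_def by (cases "H u") auto
  have hnn: "0 \<le> h u" for u using Hnonneg[OF H Hhom Hfin, of u] Hh[of u] by simp
  have hpos: "0 < h u" if "u \<noteq> 0" for u
  proof (rule ccontr)
    assume "\<not> 0 < h u"
    hence "h u = 0" using hnn[of u] by simp
    hence "(p * real_of_ereal (H u)) powr (1 / p) = 0" unfolding h_def by simp
    thus False using Hnorm that unfolding is_norm_fun_def by blast
  qed
  have Rdef: "rayleigh J H u = J u / ereal (h u)" for u unfolding rayleigh_def Hh ..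
  have Rinf: "rayleigh J H u = \<infinity>" if "u \<noteq> 0" "J u = \<infinity>" for u
    using hpos[OF that(1)] that(2) unfolding Rdef by simp
  obtain jb where jb: "J ubar = ereal jb"
    using prJ Rinf[OF ubar] finR by (cases "J ubar") auto
  define lam where "lam = jb / h ubar"
  have Rb: "rayleigh J H ubar = ereal lam" unfolding Rdef jb lam_def
    using hpos[OF ubar] by simp
  have "ereal (h ubar) \<le> ereal c * ereal jb" using c(2) Hh jb by metis
  hence "h ubar \<le> c * jb" by simp
  hence jbpos: "0 < jb"
  proof -
    assume a: "h ubar \<le> c * jb"
    show ?thesis
    proof (rule ccontr)
      assume "\<not> 0 < jb"
      hence "c * jb \<le> 0" using c(1) by (simp add: mult_nonneg_nonpos)
      thus False using a hpos[OF ubar] by simp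
    qed
  qed
  have lampos: "0 < lam" unfolding lam_def using jbpos hpos[OF ubar] by simp
  have jbeq: "jb = lam * h ubar" unfolding lam_def using hpos[OF ubar] by simp
  have sub: "jb + zeta (v - ubar) \<le> lam * h v" if vnz: "v \<noteq> 0" for v
  proof -
    have s: "J ubar + ereal (zeta (v - ubar)) \<le> J v" using zeta unfolding subdiff_def by blast
    obtain jv where jv: "J v = ereal jv"
      using prJ Rinf[OF vnz] maxR Rb vnz by (cases "J v") auto
    have "rayleigh J H v = ereal (jv / h v)" unfolding Rdef jv using hpos[OF that] by simp
    hence "jv / h v \<le> lam" using maxR that Rb by fastforce
    hence "jv \<le> lam * h v" using hpos[OF that] by (simp add: divide_le_eq mult.commute)
    moreover have "jb + zeta (v - ubar) \<le> jv" using s jb jv by simp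
    ultimately show ?thesis by simp
  qed
  have hscale: "h (t *\<^sub>R ubar) = t powr p * h ubar" if "0 < t" for t
  proof -
    have "H (t *\<^sub>R ubar) = ereal (\<bar>t\<bar> powr p) * H ubar"
      using Hhom unfolding abs_p_homogeneous_def by blast
    thus ?thesis using that Hh by (metis abs_of_pos real_of_ereal.simps(1) times_ereal.simps(1))
  qed
  have key: "lam * h ubar \<le> zeta ubar"
  proof (rule ccontr)
    assume na: "\<not> lam * h ubar \<le> zeta ubar"
    define a where "a = lam * h ubar"
    define b where "b = zeta ubar"
    define d where "d = a - b"
    have dpos: "0 < d" using na unfolding d_def a_def b_def by simp
    have apos: "0 < a" unfolding a_def using lampos hpos[OF ubar] by simp
    define t where "t = min (1/2) (d / (2 * (a + \<bar>b\<bar>)))"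
    have tpos: "0 < t" unfolding t_def using dpos apos by simp
    have tle: "t \<le> 1" unfolding t_def by simp
    have "t *\<^sub>R ubar \<noteq> 0" using tpos ubar by simp
    from sub[OF this] have "jb + zeta (t *\<^sub>R ubar - ubar) \<le> lam * h (t *\<^sub>R ubar)" .
    moreover have "zeta (t *\<^sub>R ubar - ubar) = (t - 1) * b" unfolding b_def
      by (simp add: blinfun.diff_right blinfun.scaleR_right algebra_simps)
    moreover have "h (t *\<^sub>R ubar) = t powr p * h ubar" using hscale tpos by simp
    ultimately have i1: "a + (t - 1) * b \<le> t powr p * a" using jbeq unfolding a_def by (simp add: algebra_simps)
    have "t powr p \<le> t powr 1" using tpos tle p by (intro powr_mono') auto
    hence "t powr p \<le> t" using tpos by simp
    hence "t powr p * a \<le> t * a" using apos by (simp add: mult_right_mono)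
    with i1 have "d \<le> t * a - t * b" unfolding d_def by (simp add: algebra_simps)
    also have "\<dots> \<le> t * (a + \<bar>b\<bar>)"
    proof -
      have "t * (-b) \<le> t * \<bar>b\<bar>" using tpos by (intro mult_left_mono) auto
      thus ?thesis by (simp add: algebra_simps)
    qed
    also have "\<dots> \<le> d / 2"
    proof -
      have "t \<le> d / (2 * (a + \<bar>b\<bar>))" unfolding t_def by simp
      hence "t * (a + \<bar>b\<bar>) \<le> d / (2 * (a + \<bar>b\<bar>)) * (a + \<bar>b\<bar>)"
        using apos by (intro mult_right_mono) auto
      also have "\<dots> = d / 2" using apos by (simp add: field_simps)
      finally show ?thesis .
    qed
    finally show False using dpos by simp
  qed
  have h0: "h 0 = 0"
  proof -
    have "H (0 *\<^sub>R ubar) = ereal (\<bar>0\<bar> powr p) * H ubar"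
      using Hhom unfolding abs_p_homogeneous_def by blast
    hence "H 0 = 0" using Hh[of ubar] by simp
    thus ?thesis unfolding h_def by simp
  qed
  have subH: "inverse lam *\<^sub>R zeta \<in> subdiff H ubar"
    unfolding subdiff_def
  proof (intro CollectI allI)
    fix v
    have "h ubar + inverse lam * zeta (v - ubar) \<le> h v"
    proof (cases "v = 0")
      case True
      have "h ubar * lam \<le> zeta ubar" using key by (simp add: mult.commute)
      hence "h ubar \<le> zeta ubar / lam" using lampos by (simp add: le_divide_eq)
      thus ?thesis using True h0 by (simp add: blinfun.minus_right divide_inverse mult.commute)
    next
      case False
      from sub[OF False] jbeq have "lam * h ubar + zeta (v - ubar) \<le> lam * h v" by simp
      hence "lam * (h ubar + inverse lam * zeta (v - ubar)) \<le> lam * h v"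
        using lampos by (simp add: distrib_left mult.assoc[symmetric])
      thus ?thesis using lampos by simp
    qed
    thus "H ubar + ereal (blinfun_apply (inverse lam *\<^sub>R zeta) (v - ubar)) \<le> H v"
    proof -
      have "blinfun_apply (inverse lam *\<^sub>R zeta) (v - ubar) = inverse lam * zeta (v - ubar)"
        by (simp only: blinfun.scaleR_left real_scaleR_def)
      thus ?thesis using Hh \<open>h ubar + inverse lam * zeta (v - ubar) \<le> h v\<close> by simp
    qed
  qed
  have rl: "real_of_ereal (rayleigh J H ubar) = lam" using Rb by simp
  show ?thesis unfolding rl p_eigenvector_def
    using subH ubar zeta Rb lampos by (auto intro!: bexI[of _ "inverse lam *\<^sub>R zeta"])
qed

end
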